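(* Let ${\bm L},{\bm L}_1,\dots,{\bm L}_n\in\mathbb{S}^d_{++}$ satisfy $\frac1n\sum_{i=1}^n\lambda_{\max}({\bm L}^{-1})\lambda_{\max}({\bm L}_i)\lambda_{\max}({\bm L}_i{\bm L}^{-1})=1$, let $p\in(0,1]$, $\alpha=\frac{1-p}{np}$, $\beta=\frac1n\sum_i\lambda_{\max}({\bm L}_i)\lambda_{\max}({\bm L}^{-1}{\bm L}_i)$, $\omega=\lambda_{\max}(\mathbb{E}[{\bm S}^2])-1$, and $${\bm D}^*_{{\bm L}^{-1}}=\frac{2}{1+\sqrt{1+4\alpha\beta\,\lambda_{\max}(\mathbb{E}[{\bm S}{\bm L}^{-1}{\bm S}]-{\bm L}^{-1})}}\;{\bm L}^{-1}.$$ Then $\beta\,\lambda_{\max}(\mathbb{E}[{\bm S}{\bm L}^{-1}{\bm S}]-{\bm L}^{-1})\le\omega$, and $$\frac{1}{\det({\bm D}^*_{{\bm L}^{-1}})^{1/d}}\le\lambda_{\max}({\bm L})\left(1+\sqrt{\frac{(1-p)\,\omega}{pn}}\right).$$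
   Context: $\mathbb{S}^d_{++}$: symmetric positive definite matrices; $\lambda_{\max}$: largest eigenvalue. ${\bm S}$ is a random symmetric positive semidefinite $d\times d$ matrix with $\mathbb{E}[{\bm S}]={\bm I}_d$ and finite second moments. *)

theory Defs
  imports "HOL-Analysis.Analysis" "HOL-Probability.Probability"
begin

definition real_eigenvalues :: "real^'d^'d \<Rightarrow> real set" where
  "real_eigenvalues A = {c. \<exists>v. v \<noteq> 0 \<and> A *v v = c *\<^sub>R v}"

text \<open>Largest eigenvalue (used for matrices all of whose eigenvalues are real).\<close>
definition lambda_max :: "real^'d^'d \<Rightarrow> real" where
  "lambda_max A = Max (real_eigenvalues A)"

definition sym_pos_def :: "real^'d^'d \<Rightarrow> bool" where
  "sym_pos_def A \<longleftrightarrow> transpose A = A \<and> (\<forall>x. x \<noteq> 0 \<longrightarrow> x \<bullet> (A *v x) > 0)"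

definition sym_psd :: "real^'d^'d \<Rightarrow> bool" where
  "sym_psd A \<longleftrightarrow> transpose A = A \<and> (\<forall>x. x \<bullet> (A *v x) \<ge> 0)"

end

theory Submission
  imports Defs
begin


lemma sym_inner:
  fixes M :: "real^'n^'n"
  assumes "transpose M = M"
  shows "x \<bullet> (M *v y) = y \<bullet> (M *v x)"
proof -
  have "x \<bullet> (M *v y) = (x v* M) \<bullet> y" by (simp add: dot_lmul_matrix)
  also have "x v* M = M *v x" by (metis assms transpose_matrix_vector)
  finally show ?thesis by (simp add: inner_commute)
qed

lemma lagrange_aux:
  fixes a b :: real
  assumes "\<And>t. 2 * t * a + t^2 * b \<le> 0"
  shows "a = 0"
proof (rule ccontr)
  assume a0: "a \<noteq> 0"
  define B where "B = \<bar>b\<bar> + 1"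
  have B: "B > 0" "\<bar>b\<bar> \<le> B" unfolding B_def by auto
  define t where "t = a / B"
  have h1: "t^2 * b \<ge> - (t^2 * B)"
  proof -
    have "t^2 * b \<ge> - (t^2 * \<bar>b\<bar>)" using mult_left_mono[of "-\<bar>b\<bar>" b "t^2"] by simp
    moreover have "t^2 * \<bar>b\<bar> \<le> t^2 * B" using B by (simp add: mult_left_mono)
    ultimately show ?thesis by linarith
  qed
  have h2: "2 * t * a = 2 * (t^2 * B)" unfolding t_def using B by (simp add: power2_eq_square)
  have h3: "t^2 > 0" unfolding t_def using a0 B by simp
  have "0 < t^2 * B" using h3 B by simp
  hence "2 * t * a + t^2 * b > 0" using h1 h2 by linarith
  thus False using assms[of t] by linarith
qed

lemma eig_sub:
  fixes M :: "real^'n^'n"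
  assumes sym: "transpose M = M" and W: "subspace W" and nz: "x0 \<in> W" "x0 \<noteq> 0"
    and inv: "\<And>x. x \<in> W \<Longrightarrow> M *v x \<in> W"
  shows "\<exists>v c. v \<in> W \<and> norm v = 1 \<and> M *v v = c *\<^sub>R v \<and> (\<forall>x\<in>W. x \<bullet> (M *v x) \<le> c * (x \<bullet> x))"
proof -
  let ?K = "W \<inter> sphere 0 1"
  have K1: "compact ?K" using compact_Int_closed[OF compact_sphere closed_subspace[OF W]] by (simp add: Int_commute)
  have "x0 /\<^sub>R norm x0 \<in> ?K" using nz W by (simp add: subspace_scale)
  hence K2: "?K \<noteq> {}" by blast
  have K3: "continuous_on ?K (\<lambda>x. x \<bullet> (M *v x))"
    by (rule continuous_on_inner[OF continuous_on_id linear_continuous_on[OF matrix_vector_mul_bounded_linear]])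
  obtain v where v: "v \<in> ?K" and vmax0: "\<forall>y\<in>?K. y \<bullet> (M *v y) \<le> v \<bullet> (M *v v)"
    using continuous_attains_sup[OF K1 K2 K3] by blast
  have vmax: "\<And>y. y \<in> ?K \<Longrightarrow> y \<bullet> (M *v y) \<le> v \<bullet> (M *v v)" using vmax0 by blast
  define c where "c = v \<bullet> (M *v v)"
  have vW: "v \<in> W" and vn: "norm v = 1" using v by auto
  have ray: "x \<bullet> (M *v x) \<le> c * (x \<bullet> x)" if "x \<in> W" for x
  proof (cases "x = 0")
    case True then show ?thesis by simp
  next
    case False
    define y where "y = x /\<^sub>R norm x"
    have "y \<in> ?K" using that False W unfolding y_def by (simp add: subspace_scale)
    hence "y \<bullet> (M *v y) \<le> c" using vmax c_def by blast
    moreover have "y \<bullet> (M *v y) = (x \<bullet> (M *v x)) / (norm x)^2"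
      unfolding y_def by (simp add: matrix_vector_mult_scaleR power2_eq_square divide_inverse)
    moreover have "x \<bullet> x = (norm x)^2" by (simp add: power2_norm_eq_inner)
    ultimately have "x \<bullet> (M *v x) / (norm x)^2 \<le> c" by simp
    moreover have "(norm x)^2 > 0" using False by simp
    ultimately show ?thesis using \<open>x \<bullet> x = (norm x)^2\<close> by (simp add: pos_divide_le_eq mult.commute)
  qed
  have orth: "w \<bullet> (M *v v - c *\<^sub>R v) = 0" if wW: "w \<in> W" for w
  proof -
    have "2 * t * (w \<bullet> (M *v v - c *\<^sub>R v)) + t^2 * (w \<bullet> (M *v w) - c * (w \<bullet> w)) \<le> 0" for t
    proof -
      have "v + t *\<^sub>R w \<in> W" using W vW wW by (simp add: subspace_add subspace_scale)
      from ray[OF this] have r: "(v + t *\<^sub>R w) \<bullet> (M *v (v + t *\<^sub>R w)) \<le> c * ((v + t *\<^sub>R w) \<bullet> (v + t *\<^sub>R w))" .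
      have s: "v \<bullet> (M *v w) = w \<bullet> (M *v v)" using sym_inner[OF sym] .
      have v1: "v \<bullet> v = 1" using vn by (simp add: norm_eq_1)
      have e1: "(v + t *\<^sub>R w) \<bullet> (M *v (v + t *\<^sub>R w)) = v \<bullet> (M *v v) + t * (v \<bullet> (M *v w)) + t * (w \<bullet> (M *v v)) + t * t * (w \<bullet> (M *v w))"
        by (simp add: matrix_vector_right_distrib matrix_vector_mult_scaleR inner_add_left inner_add_right algebra_simps)
      have e2: "(v + t *\<^sub>R w) \<bullet> (v + t *\<^sub>R w) = v \<bullet> v + 2 * t * (w \<bullet> v) + t * t * (w \<bullet> w)"
        by (simp add: inner_add_left inner_add_right inner_commute[of v w] algebra_simps)
      have e3: "w \<bullet> (M *v v - c *\<^sub>R v) = w \<bullet> (M *v v) - c * (w \<bullet> v)"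
        by (simp add: inner_diff_right)
      show ?thesis using r s v1 e1 e2 e3 unfolding power2_eq_square
        by (simp add: c_def[symmetric] inner_commute[of v w] algebra_simps)
    qed
    thus ?thesis using lagrange_aux by blast
  qed
  have "M *v v - c *\<^sub>R v \<in> W" using W vW inv[OF vW] by (simp add: subspace_diff subspace_scale)
  from orth[OF this] have "M *v v = c *\<^sub>R v" by simp
  thus ?thesis using vW vn ray by blast
qed


lemma eig_finite:
  fixes M :: "real^'n^'n"
  assumes sym: "transpose M = M"
  shows "finite (real_eigenvalues M)"
proof -
  define E where "E = real_eigenvalues M"
  have "\<forall>c\<in>E. \<exists>v. v \<noteq> 0 \<and> M *v v = c *\<^sub>R v" unfolding E_def real_eigenvalues_def by blast
  then obtain f where f: "\<And>c. c \<in> E \<Longrightarrow> f c \<noteq> 0 \<and> M *v f c = c *\<^sub>R f c" by metis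
  have orth: "f c \<bullet> f d = 0" if cd: "c \<in> E" "d \<in> E" "c \<noteq> d" for c d
  proof -
    have "c * (f c \<bullet> f d) = (M *v f c) \<bullet> f d" using f[OF cd(1)] by simp
    also have "\<dots> = f c \<bullet> (M *v f d)" by (metis inner_commute sym sym_inner)
    also have "\<dots> = d * (f c \<bullet> f d)" using f[OF cd(2)] by simp
    finally have "(c - d) * (f c \<bullet> f d) = 0" by (simp add: algebra_simps)
    thus ?thesis using cd(3) by simp
  qed
  have inj: "inj_on f E"
  proof (rule inj_onI)
    fix c d assume cd: "c \<in> E" "d \<in> E" "f c = f d"
    show "c = d"
    proof (rule ccontr)
      assume "c \<noteq> d"
      hence "f c \<bullet> f c = 0" using orth[OF cd(1,2)] cd(3) by simp
      thus False using f[OF cd(1)] by simp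
    qed
  qed
  have "pairwise orthogonal (f ` E)"
    unfolding pairwise_def orthogonal_def using orth by fastforce
  hence "finite (f ` E)" by (rule pairwise_orthogonal_imp_finite)
  thus ?thesis using finite_imageD inj E_def by blast
qed

lemma lmax:
  fixes M :: "real^'n^'n"
  assumes sym: "transpose M = M"
  shows "lambda_max M \<in> real_eigenvalues M" "\<And>x. x \<bullet> (M *v x) \<le> lambda_max M * (x \<bullet> x)"
    "\<And>c. c \<in> real_eigenvalues M \<Longrightarrow> c \<le> lambda_max M"
proof -
  have "axis undefined (1::real) \<noteq> (0::real^'n)" by (simp add: axis_eq_0_iff)
  from eig_sub[OF sym subspace_UNIV UNIV_I this] obtain v c where
    v: "norm v = 1" "M *v v = c *\<^sub>R v" and ray: "\<And>x. x \<bullet> (M *v x) \<le> c * (x \<bullet> x)" by auto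
  have cE: "c \<in> real_eigenvalues M" unfolding real_eigenvalues_def using v by (intro CollectI exI[of _ v]) auto
  have le: "c' \<le> c" if cm: "c' \<in> real_eigenvalues M" for c'
  proof -
    from cm obtain u where u: "u \<noteq> 0" "M *v u = c' *\<^sub>R u" unfolding real_eigenvalues_def by auto
    have "c' * (u \<bullet> u) = u \<bullet> (M *v u)" using u(2) by simp
    also have "\<dots> \<le> c * (u \<bullet> u)" by (rule ray)
    finally have h: "c' * (u \<bullet> u) \<le> c * (u \<bullet> u)" .
    have "u \<bullet> u > 0" using u(1) by simp
    thus ?thesis using h by (meson mult_le_cancel_right_pos)
  qed
  have eq: "lambda_max M = c" unfolding lambda_max_def
    by (rule Max_eqI[OF eig_finite[OF sym]]) (use le cE in auto)
  show "lambda_max M \<in> real_eigenvalues M" using eq cE by simp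
  show "\<And>x. x \<bullet> (M *v x) \<le> lambda_max M * (x \<bullet> x)" using eq ray by simp
  show "\<And>c. c \<in> real_eigenvalues M \<Longrightarrow> c \<le> lambda_max M" using eq le by simp
qed

lemma orth_eig_basis:
  fixes M :: "real^'n^'n"
  assumes sym: "transpose M = M"
  shows "k \<le> CARD('n) \<Longrightarrow> \<exists>B. card B = k \<and> finite B \<and> (\<forall>u\<in>B. norm u = 1 \<and> (\<exists>c. M *v u = c *\<^sub>R u))
     \<and> (\<forall>u\<in>B. \<forall>w\<in>B. u \<noteq> w \<longrightarrow> u \<bullet> w = 0)"
proof (induction k)
  case 0 then show ?case by (intro exI[of _ "{}"]) auto
next
  case (Suc k)
  then obtain B where B: "card B = k" "finite B" "\<And>u. u\<in>B \<Longrightarrow> norm u = 1 \<and> (\<exists>c. M *v u = c *\<^sub>R u)"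
    "\<And>u w. u\<in>B \<Longrightarrow> w\<in>B \<Longrightarrow> u \<noteq> w \<Longrightarrow> u \<bullet> w = 0" by auto
  define W where "W = {y. \<forall>x\<in>B. orthogonal x y}"
  have W: "subspace W" unfolding W_def by (rule subspace_orthogonal_to_vectors)
  have po: "pairwise orthogonal B" unfolding pairwise_def orthogonal_def using B(4) by blast
  have n0: "0 \<notin> B" using B(3) by fastforce
  have indep: "independent B" by (rule pairwise_orthogonal_independent[OF po n0])
  have d1: "dim (span B) = k" using dim_span_eq_card_independent[OF indep] B(1) by simp
  have d2: "dim (UNIV :: (real^'n) set) = CARD('n)" by simp
  have "span B \<noteq> UNIV"
  proof
    assume "span B = UNIV"
    hence "k = CARD('n)" using d1 d2 by simp
    thus False using Suc.prems by simp
  qed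
  then obtain a where a: "a \<noteq> 0" "\<And>x. x \<in> span B \<Longrightarrow> a \<bullet> x = 0" using span_not_UNIV_orthogonal by blast
  have aW: "a \<in> W" unfolding W_def orthogonal_def using a(2) span_base by (fastforce simp: inner_commute)
  have inv: "M *v y \<in> W" if "y \<in> W" for y
    unfolding W_def orthogonal_def
  proof (intro CollectI ballI)
    fix x assume x: "x \<in> B"
    then obtain c where c: "M *v x = c *\<^sub>R x" using B(3) by blast
    have "x \<bullet> (M *v y) = y \<bullet> (M *v x)" by (rule sym_inner[OF sym])
    also have "\<dots> = c * (y \<bullet> x)" using c by simp
    also have "y \<bullet> x = 0" using that x unfolding W_def orthogonal_def by (simp add: inner_commute)
    finally show "x \<bullet> (M *v y) = 0" by simp
  qed
  obtain v c where v: "v \<in> W" "norm v = 1" "M *v v = c *\<^sub>R v"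
    using eig_sub[OF sym W aW a(1) inv] by blast
  have vB: "v \<notin> B"
  proof
    assume "v \<in> B"
    hence "orthogonal v v" using v(1) unfolding W_def by blast
    thus False using v(2) by (simp add: orthogonal_self)
  qed
  have vo: "u \<bullet> v = 0" "v \<bullet> u = 0" if "u \<in> B" for u
    using v(1) that unfolding W_def orthogonal_def by (auto simp: inner_commute)
  show ?case
  proof (intro exI[of _ "insert v B"] conjI)
    show "card (insert v B) = Suc k" using B(1,2) vB by simp
    show "finite (insert v B)" using B(2) by simp
    show "\<forall>u\<in>insert v B. norm u = 1 \<and> (\<exists>c. M *v u = c *\<^sub>R u)"
    proof
      fix u assume "u \<in> insert v B"
      thus "norm u = 1 \<and> (\<exists>c. M *v u = c *\<^sub>R u)"
      proof
        assume "u = v" thus ?thesis using v(2,3) by blast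
      next
        assume "u \<in> B" thus ?thesis by (rule B(3))
      qed
    qed
    show "\<forall>u\<in>insert v B. \<forall>w\<in>insert v B. u \<noteq> w \<longrightarrow> u \<bullet> w = 0" 
    proof (intro ballI impI)
      fix u w assume uw: "u \<in> insert v B" "w \<in> insert v B" "u \<noteq> w"
      show "u \<bullet> w = 0"
      proof (cases "u = v")
        case True
        then show ?thesis using uw vo(2)[of w] by auto
      next
        case False
        then show ?thesis using uw vo(1)[of u] B(4)[of u w] by auto
      qed
    qed
  qed
qed



lemma det_sym_eig:
  fixes M :: "real^'n^'n"
  assumes sym: "transpose M = M"
  shows "\<exists>c. det M = (\<Prod>j\<in>(UNIV::'n set). c j) \<and> (\<forall>j. c j \<in> real_eigenvalues M)"
proof -
  have "\<exists>B. card B = CARD('n) \<and> finite B \<and> (\<forall>u\<in>B. norm u = 1 \<and> (\<exists>c. M *v u = c *\<^sub>R u))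
     \<and> (\<forall>u\<in>B. \<forall>w\<in>B. u \<noteq> w \<longrightarrow> u \<bullet> w = 0)"
    by (rule orth_eig_basis[OF sym order_refl])
  then obtain B where B: "card B = CARD('n)" "finite B" "\<And>u. u\<in>B \<Longrightarrow> norm u = 1 \<and> (\<exists>c. M *v u = c *\<^sub>R u)"
    "\<And>u w. u\<in>B \<Longrightarrow> w\<in>B \<Longrightarrow> u \<noteq> w \<Longrightarrow> u \<bullet> w = 0"
    by blast
  obtain f where f: "bij_betw f (UNIV::'n set) B"
    using finite_same_card_bij[of "UNIV::'n set" B] B(1,2) by auto
  have fB: "f j \<in> B" for j by (rule bij_betw_apply[OF f UNIV_I])
  have finj: "i = j" if "f i = f j" for i j using bij_betw_imp_inj_on[OF f] that by (simp add: inj_on_def)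
  have "\<forall>j. \<exists>c. M *v f j = c *\<^sub>R f j" using B(3) fB by blast
  from choice[OF this] obtain c where c0: "\<forall>j. M *v f j = c j *\<^sub>R f j" by blast
  have c: "M *v f j = c j *\<^sub>R f j" for j using c0 by blast
  define Q :: "real^'n^'n" where "Q = (\<chi> i j. f j $ i)"
  define D :: "real^'n^'n" where "D = (\<chi> i j. if i = j then c j else 0)"
  have ff: "f i \<bullet> f j = (if i = j then 1 else 0)" for i j
  proof (cases "i = j")
    case True
    have "norm (f i) = 1" using B(3)[OF fB[of i]] by blast
    hence "f i \<bullet> f i = 1" by (simp add: norm_eq_1)
    then show ?thesis using True by simp
  next
    case False
    have "f i \<noteq> f j" using finj False by blast
    hence "f i \<bullet> f j = 0" by (rule B(4)[OF fB fB])
    then show ?thesis using False by simp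
  qed
  have QQ: "transpose Q ** Q = mat 1"
  proof -
    have "(transpose Q ** Q) $ i $ j = f i \<bullet> f j" for i j
      by (simp add: matrix_matrix_mult_def transpose_def Q_def inner_vec_def)
    thus ?thesis by (simp add: vec_eq_iff ff mat_def)
  qed
  have MQ: "M ** Q = Q ** D"
  proof -
    have "(M ** Q) $ i $ j = (M *v f j) $ i" for i j
      by (simp add: matrix_matrix_mult_def matrix_vector_mult_def Q_def)
    moreover have "(Q ** D) $ i $ j = c j * f j $ i" for i j
      by (simp add: matrix_matrix_mult_def D_def Q_def if_distrib cong: if_cong)
    ultimately show ?thesis by (simp add: vec_eq_iff c)
  qed
  have "det Q * det Q = 1" using arg_cong[OF QQ, of det] by (simp add: det_mul)
  hence dQ: "det Q \<noteq> 0" by auto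
  have "det M * det Q = det Q * det D" using arg_cong[OF MQ, of det] by (simp add: det_mul)
  hence "det M = det D" using dQ by simp
  also have "det D = (\<Prod>j\<in>UNIV. c j)" by (subst det_diagonal) (auto simp: D_def)
  finally have "det M = (\<Prod>j\<in>UNIV. c j)" .
  moreover have "c j \<in> real_eigenvalues M" for j
    unfolding real_eigenvalues_def using c[of j] B(3)[OF fB[of j]] by (intro CollectI exI[of _ "f j"]) auto
  ultimately show ?thesis by (intro exI[of _ c]) blast
qed

lemma pd_eig_pos:
  fixes L :: "real^'n^'n"
  assumes "sym_pos_def L" "c \<in> real_eigenvalues L"
  shows "c > 0"
proof -
  obtain v where v: "v \<noteq> 0" "L *v v = c *\<^sub>R v" using assms(2) unfolding real_eigenvalues_def by blast
  have "v \<bullet> (L *v v) > 0" using assms(1) v(1) unfolding sym_pos_def_def by blast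
  hence "c * (v \<bullet> v) > 0" using v by simp
  moreover have "v \<bullet> v > 0" using v(1) by simp
  ultimately show ?thesis by (simp add: zero_less_mult_iff)
qed

lemma pd_inv:
  fixes L :: "real^'n^'n"
  assumes pd: "sym_pos_def L"
  shows "L ** matrix_inv L = mat 1" "matrix_inv L ** L = mat 1"
    "transpose (matrix_inv L) = matrix_inv L" "sym_pos_def (matrix_inv L)"
proof -
  have sym: "transpose L = L" using pd unfolding sym_pos_def_def by blast
  have "inj ((*v) L)"
    unfolding vec.inj_iff_eq_0
  proof (intro allI impI)
    fix x assume "L *v x = 0"
    hence "x \<bullet> (L *v x) = 0" by simp
    thus "x = 0" using pd unfolding sym_pos_def_def by force
  qed
  then obtain B where "B ** L = mat 1" using matrix_left_invertible_injective by blast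
  hence "L ** B = mat 1 \<and> B ** L = mat 1" using matrix_left_right_inverse by blast
  hence ex: "\<exists>A'. L ** A' = mat 1 \<and> A' ** L = mat 1" by blast
  have inv: "L ** matrix_inv L = mat 1 \<and> matrix_inv L ** L = mat 1"
    unfolding matrix_inv_def by (rule someI_ex[OF ex])
  show 1: "L ** matrix_inv L = mat 1" and 2: "matrix_inv L ** L = mat 1" using inv by auto
  define A where "A = matrix_inv L"
  have "transpose (L ** A) = mat 1" using 1 A_def by simp
  hence tA: "transpose A ** L = mat 1" using sym by (simp add: matrix_transpose_mul)
  have "transpose A = transpose A ** (L ** A)" using 1 A_def by simp
  also have "\<dots> = A" using tA by (simp add: matrix_mul_assoc)
  finally show 3: "transpose (matrix_inv L) = matrix_inv L" using A_def by simp
  show "sym_pos_def (matrix_inv L)"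
    unfolding sym_pos_def_def
  proof (intro conjI allI impI)
    show "transpose (matrix_inv L) = matrix_inv L" by (rule 3)
    fix x :: "real^'n" assume x: "x \<noteq> 0"
    define y where "y = matrix_inv L *v x"
    have Ly: "L *v y = x" unfolding y_def using 1 by (simp add: matrix_vector_mul_assoc)
    hence "y \<noteq> 0" using x by auto
    hence "y \<bullet> (L *v y) > 0" using pd unfolding sym_pos_def_def by blast
    moreover have "x \<bullet> (matrix_inv L *v x) = y \<bullet> (L *v y)" using Ly y_def by (simp add: inner_commute)
    ultimately show "x \<bullet> (matrix_inv L *v x) > 0" by simp
  qed
qed

lemma eig_swap_sub:
  fixes X Y :: "real^'n^'n"
  assumes "Y' ** Y = mat 1"
  shows "real_eigenvalues (X ** Y) \<subseteq> real_eigenvalues (Y ** X)"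
proof
  fix c assume "c \<in> real_eigenvalues (X ** Y)"
  then obtain v where v: "v \<noteq> 0" "(X ** Y) *v v = c *\<^sub>R v" unfolding real_eigenvalues_def by blast
  have "Y' *v (Y *v v) = v" using assms by (simp add: matrix_vector_mul_assoc)
  hence w: "Y *v v \<noteq> 0" using v(1) by auto
  have "(Y ** X) *v (Y *v v) = Y *v ((X ** Y) *v v)" by (simp add: matrix_vector_mul_assoc matrix_mul_assoc)
  also have "\<dots> = c *\<^sub>R (Y *v v)" using v(2) by (simp add: matrix_vector_mult_scaleR)
  finally show "c \<in> real_eigenvalues (Y ** X)" unfolding real_eigenvalues_def using w by blast
qed

lemma det_scaleR_mat:
  fixes A :: "real^'n^'n"
  shows "det (k *\<^sub>R A) = k ^ CARD('n) * det A"
proof -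
  have "k *\<^sub>R A = (k *\<^sub>R mat 1) ** A" by (metis matrix_mul_lid scalar_matrix_assoc)
  moreover have "det (k *\<^sub>R (mat 1 :: real^'n^'n)) = k ^ CARD('n)"
    by (subst det_diagonal) (auto simp: mat_def)
  ultimately show ?thesis by (simp add: det_mul)
qed



lemma integrable_mat_comp:
  fixes f :: "'a \<Rightarrow> real^'d^'d"
  assumes "\<And>i j. integrable M (\<lambda>\<omega>. f \<omega> $ i $ j)"
  shows "integrable M f"
proof -
  have eq: "f = (\<lambda>\<omega>. \<Sum>b\<in>Basis. (f \<omega> \<bullet> b) *\<^sub>R b)" by (simp add: euclidean_representation)
  have hb: "integrable M (\<lambda>\<omega>. f \<omega> \<bullet> b)" if "b \<in> Basis" for b
  proof -
    from that obtain i j where b: "b = axis i (axis j (1::real))" unfolding Basis_vec_def by auto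
    have "(\<lambda>\<omega>. f \<omega> \<bullet> b) = (\<lambda>\<omega>. f \<omega> $ i $ j)" by (simp add: b inner_axis)
    thus ?thesis using assms by simp
  qed
  have "integrable M (\<lambda>\<omega>. \<Sum>b\<in>Basis. (f \<omega> \<bullet> b) *\<^sub>R b)"
    by (rule Bochner_Integration.integrable_sum, rule integrable_scaleR_left, erule hb)
  thus ?thesis using eq by simp
qed

lemma bl_entry: "bounded_linear (\<lambda>Q::real^'n^'m. Q $ i $ j)"
  by (rule bounded_linear_compose[OF bounded_linear_vec_nth bounded_linear_vec_nth])

lemma bl_mv: "bounded_linear (\<lambda>Q::real^'n^'m. Q *v y)"
proof -
  have "linear (\<lambda>Q::real^'n^'m. Q *v y)"
    by (rule linearI) (simp_all add: matrix_vector_mult_add_rdistrib vec_eq_iff matrix_vector_mult_def sum_distrib_left mult.assoc distrib_right sum.distrib)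
  thus ?thesis by (simp add: linear_conv_bounded_linear)
qed

lemma bl_quad: "bounded_linear (\<lambda>Q::real^'n^'m. x \<bullet> (Q *v y))"
  by (rule bounded_linear_compose[OF bounded_linear_inner_right bl_mv])

lemma bl_quadA: "bounded_linear (\<lambda>Q::real^'n^'n. x \<bullet> (A *v (Q *v y)))"
  by (rule bounded_linear_compose[OF bounded_linear_inner_right
      bounded_linear_compose[OF matrix_vector_mul_bounded_linear bl_mv]])

lemma bl_transpose: "bounded_linear (transpose :: real^'n^'m \<Rightarrow> real^'m^'n)"
proof -
  have "linear (transpose :: real^'n^'m \<Rightarrow> real^'m^'n)"
    by (rule linearI) (simp_all add: transpose_def vec_eq_iff)
  thus ?thesis by (simp add: linear_conv_bounded_linear)
qed

lemma prod_integrable: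
  fixes f g :: "'a \<Rightarrow> real"
  assumes "integrable M (\<lambda>x. (f x)^2)" "integrable M (\<lambda>x. (g x)^2)"
    "f \<in> borel_measurable M" "g \<in> borel_measurable M"
  shows "integrable M (\<lambda>x. f x * g x)"
proof (rule Bochner_Integration.integrable_bound[of _ "\<lambda>x. (f x)^2 + (g x)^2"])
  show "integrable M (\<lambda>x. (f x)^2 + (g x)^2)" using assms by simp
  show "(\<lambda>x. f x * g x) \<in> borel_measurable M" using assms by simp
  have "\<bar>a * b\<bar> \<le> a^2 + b^2" for a b :: real
  proof -
    have "0 \<le> (\<bar>a\<bar> - \<bar>b\<bar>)^2" by simp
    hence "2 * (\<bar>a\<bar> * \<bar>b\<bar>) \<le> a^2 + b^2" by (simp add: power2_eq_square algebra_simps)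
    moreover have "0 \<le> \<bar>a\<bar> * \<bar>b\<bar>" by simp
    moreover have "\<bar>a * b\<bar> = \<bar>a\<bar> * \<bar>b\<bar>" by (simp add: abs_mult)
    ultimately show ?thesis by linarith
  qed
  thus "AE x in M. norm (f x * g x) \<le> norm ((f x)^2 + (g x)^2)" by simp
qed

lemma prob_const: "prob_space M \<Longrightarrow> integral\<^sup>L M (\<lambda>_. c::real) = c"
  by (simp add: prob_space.prob_space)

lemma prob_const_int: "prob_space M \<Longrightarrow> integrable M (\<lambda>_. c::real)"
  by (simp add: prob_space.finite_measure finite_measure.integrable_const)


lemma int_mats:
  fixes S :: "'a \<Rightarrow> real^'d^'d" and A :: "real^'d^'d"
  assumes sq: "\<And>i j. integrable M (\<lambda>\<omega>. (S \<omega> $ i $ j)^2)"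
    and ms: "\<And>i j. (\<lambda>\<omega>. S \<omega> $ i $ j) \<in> borel_measurable M"
  shows "integrable M (\<lambda>\<omega>. S \<omega> ** S \<omega>)" "integrable M (\<lambda>\<omega>. S \<omega> ** A ** S \<omega>)"
proof -
  have pr: "integrable M (\<lambda>\<omega>. S \<omega> $ i $ k * S \<omega> $ l $ j)" for i k l j
    by (rule prod_integrable[OF sq sq ms ms])
  show "integrable M (\<lambda>\<omega>. S \<omega> ** S \<omega>)"
  proof (rule integrable_mat_comp)
    fix i j
    have "(\<lambda>\<omega>. (S \<omega> ** S \<omega>) $ i $ j) = (\<lambda>\<omega>. \<Sum>k\<in>UNIV. S \<omega> $ i $ k * S \<omega> $ k $ j)"
      by (simp add: matrix_matrix_mult_def)
    moreover have "integrable M (\<lambda>\<omega>. \<Sum>k\<in>UNIV. S \<omega> $ i $ k * S \<omega> $ k $ j)"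
      by (rule Bochner_Integration.integrable_sum, rule pr)
    ultimately show "integrable M (\<lambda>\<omega>. (S \<omega> ** S \<omega>) $ i $ j)" by simp
  qed
  show "integrable M (\<lambda>\<omega>. S \<omega> ** A ** S \<omega>)"
  proof (rule integrable_mat_comp)
    fix i j
    have "(\<lambda>\<omega>. (S \<omega> ** A ** S \<omega>) $ i $ j) = (\<lambda>\<omega>. \<Sum>k\<in>UNIV. \<Sum>l\<in>UNIV. A $ l $ k * (S \<omega> $ i $ l * S \<omega> $ k $ j))"
      by (simp add: matrix_matrix_mult_def sum_distrib_right sum_distrib_left mult_ac)
    moreover have "integrable M (\<lambda>\<omega>. \<Sum>k\<in>UNIV. \<Sum>l\<in>UNIV. A $ l $ k * (S \<omega> $ i $ l * S \<omega> $ k $ j))"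
      by (rule Bochner_Integration.integrable_sum, rule Bochner_Integration.integrable_sum,
          rule Bochner_Integration.integrable_mult_right, rule pr)
    ultimately show "integrable M (\<lambda>\<omega>. (S \<omega> ** A ** S \<omega>) $ i $ j)" by simp
  qed
qed



lemma sym_int:
  fixes F :: "'a \<Rightarrow> real^'d^'d"
  assumes "integrable M F" "AE \<omega> in M. transpose (F \<omega>) = F \<omega>"
  shows "transpose (integral\<^sup>L M F) = integral\<^sup>L M F"
proof -
  have it: "integrable M (\<lambda>\<omega>. transpose (F \<omega>))" by (rule integrable_bounded_linear[OF bl_transpose assms(1)])
  have "transpose (integral\<^sup>L M F) = integral\<^sup>L M (\<lambda>\<omega>. transpose (F \<omega>))"
    using integral_bounded_linear[OF bl_transpose assms(1)] by simp
  also have "\<dots> = integral\<^sup>L M F"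
    by (rule integral_cong_AE[OF borel_measurable_integrable[OF it] borel_measurable_integrable[OF assms(1)] assms(2)])
  finally show ?thesis .
qed

lemma quad_key:
  fixes S :: "'a \<Rightarrow> real^'d^'d" and A :: "real^'d^'d" and x :: "real^'d"
  assumes P: "prob_space M"
   and iS: "integrable M S" and ES: "integral\<^sup>L M S = mat 1"
   and iSS: "integrable M (\<lambda>\<omega>. S \<omega> ** S \<omega>)" and iSAS: "integrable M (\<lambda>\<omega>. S \<omega> ** A ** S \<omega>)"
   and symS: "AE \<omega> in M. transpose (S \<omega>) = S \<omega>"
   and symA: "transpose A = A" and psdA: "\<And>z. 0 \<le> z \<bullet> (A *v z)" and rayA: "\<And>z. z \<bullet> (A *v z) \<le> \<mu> * (z \<bullet> z)"
  shows "0 \<le> x \<bullet> (integral\<^sup>L M (\<lambda>\<omega>. S \<omega> ** A ** S \<omega>) *v x) - x \<bullet> (A *v x)"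
    "x \<bullet> (integral\<^sup>L M (\<lambda>\<omega>. S \<omega> ** A ** S \<omega>) *v x) - x \<bullet> (A *v x)
       \<le> \<mu> * (x \<bullet> (integral\<^sup>L M (\<lambda>\<omega>. S \<omega> ** S \<omega>) *v x) - x \<bullet> x)"
proof -
  define fa where "fa = (\<lambda>\<omega>. x \<bullet> ((S \<omega> ** A ** S \<omega>) *v x))"
  define fb where "fb = (\<lambda>\<omega>. x \<bullet> (A *v (S \<omega> *v x)))"
  define fs where "fs = (\<lambda>\<omega>. x \<bullet> ((S \<omega> ** S \<omega>) *v x))"
  define ft where "ft = (\<lambda>\<omega>. x \<bullet> (S \<omega> *v x))"
  have ia: "integrable M fa" unfolding fa_def by (rule integrable_bounded_linear[OF bl_quad iSAS])
  have ib: "integrable M fb" unfolding fb_def by (rule integrable_bounded_linear[OF bl_quadA iS])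
  have iss: "integrable M fs" unfolding fs_def by (rule integrable_bounded_linear[OF bl_quad iSS])
  have it: "integrable M ft" unfolding ft_def by (rule integrable_bounded_linear[OF bl_quad iS])
  have Ea: "integral\<^sup>L M fa = x \<bullet> (integral\<^sup>L M (\<lambda>\<omega>. S \<omega> ** A ** S \<omega>) *v x)"
    unfolding fa_def by (rule integral_bounded_linear[OF bl_quad iSAS])
  have Eb: "integral\<^sup>L M fb = x \<bullet> (A *v x)"
    unfolding fb_def using integral_bounded_linear[OF bl_quadA iS, of x A x] ES by simp
  have Es: "integral\<^sup>L M fs = x \<bullet> (integral\<^sup>L M (\<lambda>\<omega>. S \<omega> ** S \<omega>) *v x)"
    unfolding fs_def by (rule integral_bounded_linear[OF bl_quad iSS])
  have Et: "integral\<^sup>L M ft = x \<bullet> x"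
    unfolding ft_def using integral_bounded_linear[OF bl_quad iS, of x x] ES by simp
  define ca where "ca = x \<bullet> (A *v x)"
  define cx where "cx = x \<bullet> x"
  have pw: "AE \<omega> in M. 0 \<le> fa \<omega> - 2 * fb \<omega> + ca \<and> fa \<omega> - 2 * fb \<omega> + ca \<le> \<mu> * (fs \<omega> - 2 * ft \<omega> + cx)"
    using symS
  proof eventually_elim
    case (elim \<omega>)
    define Pm where "Pm = S \<omega>"
    have sP: "transpose Pm = Pm" using elim Pm_def by simp
    define y where "y = Pm *v x"
    define z where "z = y - x"
    have ha: "fa \<omega> = y \<bullet> (A *v y)"
    proof -
      have "fa \<omega> = x \<bullet> (Pm *v (A *v y))" unfolding fa_def Pm_def y_def by (simp add: matrix_vector_mul_assoc matrix_mul_assoc)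
      also have "\<dots> = (A *v y) \<bullet> (Pm *v x)" by (rule sym_inner[OF sP])
      finally show ?thesis unfolding y_def by (simp add: inner_commute)
    qed
    have hb: "fb \<omega> = x \<bullet> (A *v y)" unfolding fb_def y_def Pm_def by simp
    have hs: "fs \<omega> = y \<bullet> y"
    proof -
      have "fs \<omega> = x \<bullet> (Pm *v y)" unfolding fs_def Pm_def y_def by (simp add: matrix_vector_mul_assoc)
      also have "\<dots> = y \<bullet> (Pm *v x)" by (rule sym_inner[OF sP])
      finally show ?thesis unfolding y_def .
    qed
    have ht: "ft \<omega> = x \<bullet> y" unfolding ft_def y_def Pm_def by simp
    have yAx: "y \<bullet> (A *v x) = x \<bullet> (A *v y)" by (rule sym_inner[OF symA])
    have hz1: "z \<bullet> (A *v z) = fa \<omega> - 2 * fb \<omega> + ca"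
      unfolding ha hb ca_def z_def using yAx
      by (simp add: matrix_vector_mult_diff_distrib inner_diff_left inner_diff_right)
    have hz2: "z \<bullet> z = fs \<omega> - 2 * ft \<omega> + cx"
      unfolding hs ht cx_def z_def
      by (simp add: inner_diff_left inner_diff_right inner_commute[of y x])
    show ?case using psdA[of z] rayA[of z] hz1 hz2 by simp
  qed
  have i1: "integrable M (\<lambda>\<omega>. fa \<omega> - 2 * fb \<omega> + ca)"
    using ia ib prob_const_int[OF P] by simp
  have i2: "integrable M (\<lambda>\<omega>. \<mu> * (fs \<omega> - 2 * ft \<omega> + cx))"
    using iss it prob_const_int[OF P] by simp
  have I1: "integral\<^sup>L M (\<lambda>\<omega>. fa \<omega> - 2 * fb \<omega> + ca) = integral\<^sup>L M fa - 2 * integral\<^sup>L M fb + ca"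
    using ia ib prob_const_int[OF P] prob_const[OF P] by simp
  have I2: "integral\<^sup>L M (\<lambda>\<omega>. \<mu> * (fs \<omega> - 2 * ft \<omega> + cx)) = \<mu> * (integral\<^sup>L M fs - 2 * integral\<^sup>L M ft + cx)"
    using iss it prob_const_int[OF P] prob_const[OF P] by simp
  have "integral\<^sup>L M (\<lambda>_. 0::real) \<le> integral\<^sup>L M (\<lambda>\<omega>. fa \<omega> - 2 * fb \<omega> + ca)"
    by (rule integral_mono_AE[OF prob_const_int[OF P] i1]) (use pw in auto)
  thus "0 \<le> x \<bullet> (integral\<^sup>L M (\<lambda>\<omega>. S \<omega> ** A ** S \<omega>) *v x) - x \<bullet> (A *v x)"
    using I1 Ea Eb ca_def by simp
  have "integral\<^sup>L M (\<lambda>\<omega>. fa \<omega> - 2 * fb \<omega> + ca) \<le> integral\<^sup>L M (\<lambda>\<omega>. \<mu> * (fs \<omega> - 2 * ft \<omega> + cx))"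
    by (rule integral_mono_AE[OF i1 i2]) (use pw in auto)
  hence "integral\<^sup>L M fa - 2 * integral\<^sup>L M fb + ca \<le> \<mu> * (integral\<^sup>L M fs - 2 * integral\<^sup>L M ft + cx)"
    by (simp only: I1 I2)
  thus "x \<bullet> (integral\<^sup>L M (\<lambda>\<omega>. S \<omega> ** A ** S \<omega>) *v x) - x \<bullet> (A *v x)
       \<le> \<mu> * (x \<bullet> (integral\<^sup>L M (\<lambda>\<omega>. S \<omega> ** S \<omega>) *v x) - x \<bullet> x)"
    unfolding Ea Eb Es Et ca_def cx_def by (simp add: algebra_simps)
qed



theorem corollary3:
  fixes M :: "'a measure"
    and S :: "'a \<Rightarrow> real^'d^'d"
    and L :: "real^'d^'d"
    and Ls :: "nat \<Rightarrow> real^'d^'d"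
    and n :: nat and p :: real
  assumes "prob_space M"
    and "S \<in> borel_measurable M"
    and "AE \<omega> in M. sym_psd (S \<omega>)"
    and "integrable M S"
    and "integral\<^sup>L M S = mat 1"
    and "\<And>i j. integrable M (\<lambda>\<omega>. (S \<omega> $ i $ j)\<^sup>2)"
    and "n \<ge> 1"
    and "sym_pos_def L"
    and "\<And>i. i < n \<Longrightarrow> sym_pos_def (Ls i)"
    and "(1 / real n) * (\<Sum>i<n. lambda_max (matrix_inv L) * lambda_max (Ls i)
            * lambda_max (Ls i ** matrix_inv L)) = 1"
    and "0 < p" and "p \<le> 1"
  shows "let \<alpha> = (1 - p) / (real n * p);
             \<beta> = (1 / real n) * (\<Sum>i<n. lambda_max (Ls i) * lambda_max (matrix_inv L ** Ls i));
             om = lambda_max (integral\<^sup>L M (\<lambda>\<omega>. S \<omega> ** S \<omega>)) - 1;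
             lam = lambda_max (integral\<^sup>L M (\<lambda>\<omega>. S \<omega> ** matrix_inv L ** S \<omega>) - matrix_inv L);
             D = (2 / (1 + sqrt (1 + 4 * \<alpha> * \<beta> * lam))) *\<^sub>R matrix_inv L
         in \<beta> * lam \<le> om \<and>
            1 / (det D powr (1 / real CARD('d)))
              \<le> lambda_max L * (1 + sqrt ((1 - p) * om / (p * real n)))"
proof -
  note P = assms(1)
  define A where "A = matrix_inv L"
  have LA: "L ** A = mat 1" and AL: "A ** L = mat 1" and symA: "transpose A = A" and pdA: "sym_pos_def A"
    using pd_inv[OF assms(8)] A_def by auto
  have symL: "transpose L = L" using assms(8) unfolding sym_pos_def_def by blast
  define \<mu> where "\<mu> = lambda_max A"
  have \<mu>eig: "\<mu> \<in> real_eigenvalues A" using lmax(1)[OF symA] \<mu>_def by simp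
  have rayA: "\<And>z. z \<bullet> (A *v z) \<le> \<mu> * (z \<bullet> z)" using lmax(2)[OF symA] \<mu>_def by simp
  have \<mu>pos: "\<mu> > 0" by (rule pd_eig_pos[OF pdA \<mu>eig])
  have psdA: "0 \<le> z \<bullet> (A *v z)" for z
  proof (cases "z = 0")
    case True then show ?thesis by simp
  next
    case False then show ?thesis using pdA unfolding sym_pos_def_def by (simp add: less_imp_le)
  qed
  have eqLi: "lambda_max (Ls i ** A) = lambda_max (A ** Ls i)" if "i < n" for i
  proof -
    have "real_eigenvalues (Ls i ** A) \<subseteq> real_eigenvalues (A ** Ls i)" by (rule eig_swap_sub[OF LA])
    moreover have "real_eigenvalues (A ** Ls i) \<subseteq> real_eigenvalues (Ls i ** A)"
      by (rule eig_swap_sub[OF pd_inv(2)[OF assms(9)[OF that]]])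
    ultimately have "real_eigenvalues (Ls i ** A) = real_eigenvalues (A ** Ls i)" by (rule subset_antisym)
    thus ?thesis unfolding lambda_max_def by simp
  qed
  define \<beta> where "\<beta> = (1 / real n) * (\<Sum>i<n. lambda_max (Ls i) * lambda_max (A ** Ls i))"
  have \<mu>\<beta>: "\<mu> * \<beta> = 1"
  proof -
    have "(\<Sum>i<n. \<mu> * lambda_max (Ls i) * lambda_max (Ls i ** A)) = (\<Sum>i<n. \<mu> * (lambda_max (Ls i) * lambda_max (A ** Ls i)))"
      by (rule sum.cong) (auto simp: eqLi)
    also have "\<dots> = \<mu> * (\<Sum>i<n. lambda_max (Ls i) * lambda_max (A ** Ls i))" by (simp add: sum_distrib_left)
    finally have "(1 / real n) * (\<Sum>i<n. \<mu> * lambda_max (Ls i) * lambda_max (Ls i ** A)) = \<mu> * \<beta>"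
      unfolding \<beta>_def by simp
    thus ?thesis using assms(10) unfolding A_def[symmetric] \<mu>_def[symmetric] by simp
  qed
  have \<beta>eq: "\<beta> = 1 / \<mu>" using \<mu>\<beta> \<mu>pos by (simp add: field_simps)
  have \<beta>pos: "\<beta> > 0" using \<beta>eq \<mu>pos by simp
  have ms: "(\<lambda>\<omega>. S \<omega> $ i $ j) \<in> borel_measurable M" for i j
    by (rule borel_measurable_integrable[OF integrable_bounded_linear[OF bl_entry assms(4)]])
  have iSS: "integrable M (\<lambda>\<omega>. S \<omega> ** S \<omega>)" using int_mats(1)[OF assms(6) ms] .
  have iSAS: "integrable M (\<lambda>\<omega>. S \<omega> ** A ** S \<omega>)" using int_mats(2)[OF assms(6) ms] .
  have symS: "AE \<omega> in M. transpose (S \<omega>) = S \<omega>" using assms(3) by eventually_elim (simp add: sym_psd_def)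
  define ES2 where "ES2 = integral\<^sup>L M (\<lambda>\<omega>. S \<omega> ** S \<omega>)"
  define ESAS where "ESAS = integral\<^sup>L M (\<lambda>\<omega>. S \<omega> ** A ** S \<omega>)"
  have "AE \<omega> in M. transpose (S \<omega> ** S \<omega>) = S \<omega> ** S \<omega>"
    using symS by eventually_elim (simp add: matrix_transpose_mul)
  hence symES2: "transpose ES2 = ES2" unfolding ES2_def by (rule sym_int[OF iSS])
  have "AE \<omega> in M. transpose (S \<omega> ** A ** S \<omega>) = S \<omega> ** A ** S \<omega>"
    using symS by eventually_elim (simp add: matrix_transpose_mul symA matrix_mul_assoc)
  hence symESAS: "transpose ESAS = ESAS" unfolding ESAS_def by (rule sym_int[OF iSAS])
  define Mm where "Mm = ESAS - A"
  have symM: "transpose Mm = Mm"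
  proof -
    have "transpose Mm = transpose ESAS - transpose A" unfolding Mm_def by (simp add: transpose_def vec_eq_iff)
    thus ?thesis using symESAS symA Mm_def by simp
  qed
  have key1: "0 \<le> x \<bullet> (Mm *v x)" for x
    using quad_key(1)[OF P assms(4) assms(5) iSS iSAS symS symA psdA rayA, of x]
    unfolding Mm_def ESAS_def by (simp add: matrix_vector_mult_diff_rdistrib inner_diff_right)
  have key2: "x \<bullet> (Mm *v x) \<le> \<mu> * (x \<bullet> (ES2 *v x) - x \<bullet> x)" for x
    using quad_key(2)[OF P assms(4) assms(5) iSS iSAS symS symA psdA rayA, of x]
    unfolding Mm_def ESAS_def ES2_def by (simp add: matrix_vector_mult_diff_rdistrib inner_diff_right)
  define om where "om = lambda_max ES2 - 1"
  have rayES2: "x \<bullet> (ES2 *v x) \<le> lambda_max ES2 * (x \<bullet> x)" for x using lmax(2)[OF symES2] .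
  define lam where "lam = lambda_max Mm"
  have "lam \<in> real_eigenvalues Mm" using lmax(1)[OF symM] lam_def by simp
  then obtain v where v: "v \<noteq> 0" "Mm *v v = lam *\<^sub>R v" unfolding real_eigenvalues_def by auto
  have vv: "v \<bullet> v > 0" using v(1) by simp
  have lv: "lam * (v \<bullet> v) = v \<bullet> (Mm *v v)" using v(2) by simp
  have lam0: "lam \<ge> 0"
  proof -
    have "0 \<le> lam * (v \<bullet> v)" using lv key1[of v] by simp
    thus ?thesis using vv by (simp add: zero_le_mult_iff)
  qed
  have "lam * (v \<bullet> v) \<le> \<mu> * (v \<bullet> (ES2 *v v) - v \<bullet> v)" using lv key2[of v] by simp
  also have "\<dots> \<le> \<mu> * (lambda_max ES2 * (v \<bullet> v) - v \<bullet> v)"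
    using rayES2[of v] \<mu>pos by (intro mult_left_mono) auto
  also have "\<dots> = (\<mu> * om) * (v \<bullet> v)" unfolding om_def by (simp add: algebra_simps)
  finally have lamle: "lam \<le> \<mu> * om" using vv by (simp add: mult_le_cancel_right)
  have part1: "\<beta> * lam \<le> om"
  proof -
    have "\<beta> * lam = lam / \<mu>" using \<beta>eq by simp
    also have "\<dots> \<le> om" using lamle \<mu>pos by (simp add: divide_le_eq mult.commute)
    finally show ?thesis .
  qed
  have om0: "om \<ge> 0" using part1 \<beta>pos lam0 by (smt (verit) mult_nonneg_nonneg)
  define \<alpha> where "\<alpha> = (1 - p) / (real n * p)"
  have \<alpha>0: "\<alpha> \<ge> 0" unfolding \<alpha>_def using assms(7,11,12) by simp
  define k where "k = 2 / (1 + sqrt (1 + 4 * \<alpha> * \<beta> * lam))"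
  have t0: "0 \<le> \<alpha> * \<beta> * lam" using \<alpha>0 \<beta>pos lam0 by simp
  have "1 \<le> 1 + 4 * \<alpha> * \<beta> * lam" using t0 by (simp add: mult.assoc)
  hence sq1: "1 \<le> sqrt (1 + 4 * \<alpha> * \<beta> * lam)" by (rule real_sqrt_ge_one)
  have "1 + sqrt (1 + 4 * \<alpha> * \<beta> * lam) > 0" using sq1 by linarith
  hence kpos: "k > 0" unfolding k_def by simp
  have invk: "1 / k = (1 + sqrt (1 + 4 * \<alpha> * \<beta> * lam)) / 2" unfolding k_def by simp
  define s where "s = sqrt (\<alpha> * om)"
  have s0: "s \<ge> 0" unfolding s_def using \<alpha>0 om0 by simp
  have s2: "s^2 = \<alpha> * om" unfolding s_def using \<alpha>0 om0 by simp
  have "1 + 4 * \<alpha> * \<beta> * lam \<le> 1 + 4 * (\<alpha> * om)"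
  proof -
    have "\<alpha> * (\<beta> * lam) \<le> \<alpha> * om" using part1 \<alpha>0 by (rule mult_left_mono)
    thus ?thesis by (simp add: mult.assoc)
  qed
  also have "\<dots> \<le> (1 + 2 * s)^2" using s2 s0 by (simp add: power2_eq_square algebra_simps)
  finally have "sqrt (1 + 4 * \<alpha> * \<beta> * lam) \<le> sqrt ((1 + 2 * s)^2)" by (rule real_sqrt_le_mono)
  hence "sqrt (1 + 4 * \<alpha> * \<beta> * lam) \<le> 1 + 2 * s" using s0 by simp
  hence invk_le: "1 / k \<le> 1 + s" unfolding invk by simp
  have \<alpha>om: "(1 - p) * om / (p * real n) = \<alpha> * om" unfolding \<alpha>_def by (simp add: field_simps)
  obtain c where dc: "det L = (\<Prod>j\<in>(UNIV::'d set). c j)" "\<And>j. c j \<in> real_eigenvalues L"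
    using det_sym_eig[OF symL] by blast
  have cpos: "c j > 0" for j by (rule pd_eig_pos[OF assms(8) dc(2)])
  have cle: "c j \<le> lambda_max L" for j by (rule lmax(3)[OF symL dc(2)])
  have lLpos: "lambda_max L > 0" by (rule pd_eig_pos[OF assms(8) lmax(1)[OF symL]])
  have detLpos: "det L > 0" unfolding dc(1) by (rule prod_pos) (use cpos in auto)
  have "det L \<le> (\<Prod>j\<in>(UNIV::'d set). lambda_max L)" unfolding dc(1)
    by (rule prod_mono) (use cpos cle in \<open>auto intro: less_imp_le\<close>)
  hence detLle: "det L \<le> lambda_max L ^ CARD('d)" by simp
  have detA: "det A = 1 / det L"
  proof -
    have "det A * det L = 1" using arg_cong[OF AL, of det] by (simp add: det_mul)
    thus ?thesis using detLpos by (simp add: field_simps)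
  qed
  define d where "d = real CARD('d)"
  have dpos: "d > 0" unfolding d_def by simp
  have rootpow: "(y ^ CARD('d)) powr (1 / d) = y" if "y > 0" for y :: real
  proof -
    have "(y ^ CARD('d)) = y powr d" unfolding d_def using that by (simp add: powr_realpow)
    hence "(y ^ CARD('d)) powr (1 / d) = y powr (d * (1 / d))" by (simp add: powr_powr)
    also have "\<dots> = y" using dpos that by simp
    finally show ?thesis .
  qed
  have detD: "det (k *\<^sub>R A) = k ^ CARD('d) / det L" using det_scaleR_mat[of k A] detA by simp
  have "det (k *\<^sub>R A) powr (1 / d) = (k ^ CARD('d)) powr (1 / d) / (det L) powr (1 / d)"
    unfolding detD by (rule powr_divide)
  also have "\<dots> = k / (det L) powr (1 / d)" using rootpow[OF kpos] by simp
  finally have pd: "1 / (det (k *\<^sub>R A) powr (1 / d)) = (det L) powr (1 / d) / k" using kpos by simp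
  have "(det L) powr (1 / d) \<le> (lambda_max L ^ CARD('d)) powr (1 / d)"
    using detLle detLpos dpos by (intro powr_mono2) auto
  also have "\<dots> = lambda_max L" by (rule rootpow[OF lLpos])
  finally have dLr: "(det L) powr (1 / d) \<le> lambda_max L" .
  have "(det L) powr (1 / d) / k \<le> lambda_max L / k" using dLr kpos by (simp add: divide_right_mono)
  also have "\<dots> = lambda_max L * (1 / k)" by simp
  also have "\<dots> \<le> lambda_max L * (1 + s)" using invk_le lLpos by (intro mult_left_mono) auto
  finally have part2: "1 / (det (k *\<^sub>R A) powr (1 / d)) \<le> lambda_max L * (1 + sqrt ((1 - p) * om / (p * real n)))"
    unfolding pd \<alpha>om s_def .
  show ?thesis
    unfolding Let_def A_def[symmetric] ES2_def[symmetric] ESAS_def[symmetric] Mm_def[symmetric]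
      \<alpha>_def[symmetric] \<beta>_def[symmetric] om_def[symmetric] lam_def[symmetric] k_def[symmetric] d_def[symmetric]
    using part1 part2 by blast
qed


end
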